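(* Let $p\equiv 1\pmod 4$ be a prime with $p\ge 13$, let $\pi\in\mathbb{Z}[i]$ with $\pi\pi^*=p$, and let $C$ be an $(n,k)$ linear code over $G_\pi$. If $C$ corrects all errors of Mannheim weight $2$ or less, then $p^{n-k}\ge 8n^2+1$.
   Context: $G=\mathbb{Z}[i]$ is the ring of Gaussian integers, $\pi^*$ is the complex conjugate of $\pi$, and $G_\pi=G/\pi G$ (a field with $p$ elements). The Mannheim weight of $\beta\in G_\pi$ is $\min\{|a|+|b| : a+bi\equiv\beta \pmod \pi\}$; the Mannheim weight of a vector in $G_\pi^n$ is the sum of the Mannheim weights of its components. An $(n,k)$ linear code over $G_\pi$ is a $k$-dimensional subspace $C\subseteq G_\pi^n$ (so there are $p^{n-k}$ cosets). $C$ corrects all errors of weight $2$ or less if all vectors of $G_\pi^n$ of Mannheim weight at most $2$ lie in pairwise distinct cosets of $C$. *)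

theory Defs
  imports Complex_Main "HOL-Computational_Algebra.Primes"
begin

definition gauss_int :: "complex \<Rightarrow> bool" where
  "gauss_int z \<longleftrightarrow> Re z \<in> \<int> \<and> Im z \<in> \<int>"

text \<open>Congruence modulo pi in Z[i]: alpha and beta give the same element of G_pi = G / pi G.\<close>
definition gcong :: "complex \<Rightarrow> complex \<Rightarrow> complex \<Rightarrow> bool" where
  "gcong \<pi> \<alpha> \<beta> \<longleftrightarrow> (\<exists>\<gamma>. gauss_int \<gamma> \<and> \<alpha> - \<beta> = \<pi> * \<gamma>)"

definition mannheim_weight :: "complex \<Rightarrow> complex \<Rightarrow> nat" where
  "mannheim_weight \<pi> \<beta> =
     (LEAST w. \<exists>a b :: int. w = nat (\<bar>a\<bar> + \<bar>b\<bar>) \<and>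
                  gcong \<pi> (of_int a + of_int b * \<i>) \<beta>)"

text \<open>Representatives of vectors in G_pi^n: Gaussian integer vectors indexed by 0..<n, zero elsewhere.\<close>
definition gvecs :: "nat \<Rightarrow> (nat \<Rightarrow> complex) set" where
  "gvecs n = {x. (\<forall>i<n. gauss_int (x i)) \<and> (\<forall>i\<ge>n. x i = 0)}"

definition vcong :: "complex \<Rightarrow> nat \<Rightarrow> (nat \<Rightarrow> complex) \<Rightarrow> (nat \<Rightarrow> complex) \<Rightarrow> bool" where
  "vcong \<pi> n x y \<longleftrightarrow> (\<forall>i<n. gcong \<pi> (x i) (y i))"

definition vec_mannheim_weight :: "complex \<Rightarrow> nat \<Rightarrow> (nat \<Rightarrow> complex) \<Rightarrow> nat" where
  "vec_mannheim_weight \<pi> n x = (\<Sum>i<n. mannheim_weight \<pi> (x i))"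

text \<open>An (n,k) linear code over G_pi, represented by its full preimage C in Z[i]^n:
  C is a union of residue classes, closed under addition and scalar multiplication,
  and (C mod pi) has a basis of k vectors over G_pi.\<close>
definition linear_code :: "complex \<Rightarrow> nat \<Rightarrow> nat \<Rightarrow> (nat \<Rightarrow> complex) set \<Rightarrow> bool" where
  "linear_code \<pi> n k C \<longleftrightarrow>
     C \<subseteq> gvecs n \<and> (\<lambda>i. 0) \<in> C \<and>
     (\<forall>x\<in>C. \<forall>y\<in>C. (\<lambda>i. x i + y i) \<in> C) \<and>
     (\<forall>c x. gauss_int c \<and> x \<in> C \<longrightarrow> (\<lambda>i. c * x i) \<in> C) \<and>
     (\<forall>x\<in>gvecs n. \<forall>y\<in>C. vcong \<pi> n x y \<longrightarrow> x \<in> C) \<and>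
     (\<exists>b :: nat \<Rightarrow> nat \<Rightarrow> complex.
        (\<forall>j<k. b j \<in> C) \<and>
        (\<forall>x\<in>C. \<exists>l. (\<forall>j<k. gauss_int (l j)) \<and>
                      vcong \<pi> n x (\<lambda>i. \<Sum>j<k. l j * b j i)) \<and>
        (\<forall>l. (\<forall>j<k. gauss_int (l j)) \<and> vcong \<pi> n (\<lambda>i. \<Sum>j<k. l j * b j i) (\<lambda>i. 0)
              \<longrightarrow> (\<forall>j<k. gcong \<pi> (l j) 0)))"

definition corrects_weight2 :: "complex \<Rightarrow> nat \<Rightarrow> (nat \<Rightarrow> complex) set \<Rightarrow> bool" where
  "corrects_weight2 \<pi> n C \<longleftrightarrow>
     (\<forall>x\<in>gvecs n. \<forall>y\<in>gvecs n.
        vec_mannheim_weight \<pi> n x \<le> 2 \<and> vec_mannheim_weight \<pi> n y \<le> 2 \<and>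
        \<not> vcong \<pi> n x y \<longrightarrow> (\<lambda>i. x i - y i) \<notin> C)"

end

theory Submission
  imports Defs "HOL-Library.FuncSet"
begin


lemma gi_add[intro]: "gauss_int a \<Longrightarrow> gauss_int b \<Longrightarrow> gauss_int (a + b)"
  by (auto simp: gauss_int_def)
lemma gi_diff[intro]: "gauss_int a \<Longrightarrow> gauss_int b \<Longrightarrow> gauss_int (a - b)"
  by (auto simp: gauss_int_def)
lemma gi_mult[intro]: "gauss_int a \<Longrightarrow> gauss_int b \<Longrightarrow> gauss_int (a * b)"
  by (auto simp: gauss_int_def)
lemma gi_uminus[intro]: "gauss_int a \<Longrightarrow> gauss_int (- a)"
  by (auto simp: gauss_int_def)
lemma gi_cnj[intro]: "gauss_int a \<Longrightarrow> gauss_int (cnj a)"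
  by (auto simp: gauss_int_def)
lemma gi_of_int[intro]: "gauss_int (of_int a)" by (auto simp: gauss_int_def)
lemma gi_of_nat[intro]: "gauss_int (of_nat a)" by (auto simp: gauss_int_def)
lemma gi_ii[intro]: "gauss_int \<i>" by (auto simp: gauss_int_def)
lemma gi_0[intro]: "gauss_int 0" by (auto simp: gauss_int_def)
lemma gi_1[intro]: "gauss_int 1" by (auto simp: gauss_int_def)
lemma gi_sum[intro]: "(\<And>j. j \<in> A \<Longrightarrow> gauss_int (f j)) \<Longrightarrow> gauss_int (\<Sum>j\<in>A. f j)"
  by (induction A rule: infinite_finite_induct) auto

lemma gauss_intE:
  assumes "gauss_int z" obtains a b :: int where "z = of_int a + of_int b * \<i>"
proof -
  from assms obtain a b where "Re z = of_int a" "Im z = of_int b"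
    by (auto simp: gauss_int_def elim!: Ints_cases)
  then show ?thesis using that[of a b] by (auto simp: complex_eq_iff)
qed

lemma gcong_refl[intro]: "gcong \<pi> z z"
  unfolding gcong_def by (rule exI[of _ 0]) auto
lemma gcong_sym: "gcong \<pi> z w \<Longrightarrow> gcong \<pi> w z"
  unfolding gcong_def by (metis gi_uminus minus_diff_eq mult_minus_right)
lemma gcong_trans: "gcong \<pi> z w \<Longrightarrow> gcong \<pi> w u \<Longrightarrow> gcong \<pi> z u"
  unfolding gcong_def
proof (elim exE conjE)
  fix a b assume "gauss_int a" "z - w = \<pi> * a" "gauss_int b" "w - u = \<pi> * b"
  then show "\<exists>c. gauss_int c \<and> z - u = \<pi> * c"
    by (intro exI[of _ "a + b"]) (auto simp: algebra_simps)
qed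

lemma norm_eq:
  assumes "\<pi> * cnj \<pi> = of_nat p" "z = \<pi> * g"
  shows "Re z ^ 2 + Im z ^ 2 = real p * (Re g ^ 2 + Im g ^ 2)"
proof -
  have "z * cnj z = (\<pi> * cnj \<pi>) * (g * cnj g)" using assms(2) by (simp add: algebra_simps)
  also have "\<dots> = of_nat p * (g * cnj g)" using assms(1) by simp
  finally have "complex_of_real (Re z ^ 2 + Im z ^ 2) = complex_of_real (real p * (Re g ^ 2 + Im g ^ 2))"
    by (simp add: complex_mult_cnj)
  then show ?thesis using of_real_eq_iff by blast
qed

lemma small_enum:
  fixes e f :: int assumes "\<bar>e\<bar> + \<bar>f\<bar> \<le> 4" "e^2 + f^2 \<ge> 13" shows "e^2 + f^2 = 16"
proof -
  have "e \<in> {-4..4}" "f \<in> {-4..4}" using assms(1) by auto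
  then have "e \<in> {-4,-3,-2,-1,0,1,2,3,4}" "f \<in> {-4,-3,-2,-1,0,1,2,3,4}" by auto
  then show ?thesis using assms by (auto simp: power2_eq_square)
qed

definition small :: "complex \<Rightarrow> bool" where
  "small z \<longleftrightarrow> gauss_int z \<and> \<bar>Re z\<bar> + \<bar>Im z\<bar> \<le> 2"

lemma int_parts:
  assumes "gauss_int z" obtains e f :: int where "Re z = of_int e" "Im z = of_int f"
  using assms by (auto simp: gauss_int_def elim!: Ints_cases)

lemma small_inj:
  assumes p: "prime p" "p mod 4 = 1" "p \<ge> 13" and pi: "\<pi> * cnj \<pi> = of_nat p"
    and z: "small z" and w: "small w" and c: "gcong \<pi> z w"
  shows "z = w"
proof -
  from c obtain g where g: "gauss_int g" "z - w = \<pi> * g" by (auto simp: gcong_def)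
  have "gauss_int (z - w)" using z w by (auto simp: small_def)
  then obtain e f where ef: "Re (z - w) = of_int e" "Im (z - w) = of_int f" by (rule int_parts)
  from g obtain u v where uv: "Re g = of_int u" "Im g = of_int v" by (auto elim: int_parts)
  have "\<bar>Re (z - w)\<bar> + \<bar>Im (z - w)\<bar> \<le> 4" using z w by (auto simp: small_def)
  then have ef4: "\<bar>e\<bar> + \<bar>f\<bar> \<le> 4" using ef by simp
  have "Re (z - w) ^ 2 + Im (z - w) ^ 2 = real p * (Re g ^ 2 + Im g ^ 2)"
    using norm_eq[OF pi g(2)] .
  then have "real_of_int (e^2 + f^2) = real_of_int (int p * (u^2 + v^2))" using ef uv by simp
  then have eq: "e^2 + f^2 = int p * (u^2 + v^2)" using of_int_eq_iff by blast
  show ?thesis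
  proof (cases "u^2 + v^2 = 0")
    case True
    then have "e^2 + f^2 = 0" using eq by simp
    then have "e = 0" "f = 0" by (auto simp: sum_power2_eq_zero_iff)
    then show ?thesis using ef by (simp add: complex_eq_iff)
  next
    case False
    then have "u^2 + v^2 \<ge> 1" by (smt (verit) zero_le_power2)
    then have "e^2 + f^2 \<ge> int p" using eq by (simp add: mult_le_cancel_left1)
    then have "e^2 + f^2 \<ge> 13" using p by linarith
    then have "e^2 + f^2 = 16" using small_enum ef4 by blast
    with eq have "int p * (u^2 + v^2) = 16" by simp
    moreover have "int p \<ge> 13" using p by simp
    moreover have "u^2 + v^2 = 1"
    proof (rule ccontr)
      assume "u^2 + v^2 \<noteq> 1"
      then have "u^2 + v^2 \<ge> 2" using \<open>u^2 + v^2 \<ge> 1\<close> by linarith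
      then have "int p * (u^2 + v^2) \<ge> int p * 2" by (simp add: mult_left_mono)
      then show False using \<open>int p * (u^2 + v^2) = 16\<close> \<open>int p \<ge> 13\<close> by linarith
    qed
    ultimately have "int p = 16" by simp
    then have "p = 16" by simp
    then show ?thesis using p by simp
  qed
qed

lemma reps_distinct:
  assumes p: "prime p" and pi: "\<pi> * cnj \<pi> = of_nat p"
    and ab: "a < p" "b < p" and c: "gcong \<pi> (of_nat a) (of_nat b)"
  shows "a = b"
proof -
  from c obtain g where g: "gauss_int g" "of_nat a - of_nat b = \<pi> * g" by (auto simp: gcong_def)
  from g obtain u v where uv: "Re g = of_int u" "Im g = of_int v" by (auto elim: int_parts)
  have "Re (of_nat a - of_nat b :: complex) ^ 2 + Im (of_nat a - of_nat b :: complex) ^ 2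
        = real p * (Re g ^ 2 + Im g ^ 2)" using norm_eq[OF pi g(2)] .
  then have "real_of_int ((int a - int b)^2) = real_of_int (int p * (u^2 + v^2))" using uv by simp
  then have "(int a - int b)^2 = int p * (u^2 + v^2)" using of_int_eq_iff by blast
  then have "int p dvd (int a - int b)^2" by simp
  moreover have "prime (int p)" using p by simp
  ultimately have "int p dvd (int a - int b)" using prime_dvd_power by blast
  then obtain q where q: "int a - int b = int p * q" by (auto elim: dvdE)
  have "q = 0"
  proof (rule ccontr)
    assume "q \<noteq> 0"
    then have "\<bar>q\<bar> \<ge> 1" by (auto simp: abs_if)
    then have "\<bar>int p * q\<bar> \<ge> int p" by (simp add: abs_mult mult_le_cancel_left1)
    then show False using q ab by linarith
  qed
  then show ?thesis using q by simp
qed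


lemma reps_exist:
  assumes p: "prime p" and pi: "\<pi> * cnj \<pi> = of_nat p" and gp: "gauss_int \<pi>"
  shows "\<exists>r. \<forall>z. gauss_int z \<longrightarrow> r z < p \<and> gcong \<pi> z (of_nat (r z))"
proof -
  obtain x y where xy: "Re \<pi> = of_int x" "Im \<pi> = of_int y" using gp by (rule int_parts)
  have "Re (\<pi> * cnj \<pi>) = real p" using pi by simp
  then have "real_of_int (x^2 + y^2) = real_of_int (int p)" using xy
    by (simp add: power2_eq_square)
  then have xyp: "x^2 + y^2 = int p" using of_int_eq_iff by blast
  have pp: "prime (int p)" using p by simp
  have ndvd: "\<not> int p dvd y"
  proof
    assume "int p dvd y"
    then have "int p dvd y^2" by (simp add: power2_eq_square)
    then have "int p dvd x^2" using xyp by (metis dvd_add_left_iff dvd_refl)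
    then have "int p dvd x" using pp prime_dvd_power by blast
    then have "int p * int p dvd x^2" "int p * int p dvd y^2"
      using \<open>int p dvd y\<close> by (auto simp: power2_eq_square mult_dvd_mono)
    then have "int p * int p dvd int p" using xyp by (metis dvd_add)
    then have "int p dvd 1" using p by (simp add: prime_gt_0_nat)
    then have "int p \<le> 1" using zdvd_imp_le by force
    moreover have "p \<ge> 2" using p by (rule prime_ge_2_nat)
    ultimately show False by linarith
  qed
  have "coprime (int p) y" by (rule prime_imp_coprime[OF pp ndvd])
  then have "gcd (int p) y = 1" by simp
  then obtain s y' where sy: "s * int p + y' * y = 1"
    using bezout_coefficients_fst_snd[of "int p" y] by auto
  define r where "r z = nat ((\<lfloor>Re z\<rfloor> - \<lfloor>Im z\<rfloor> * x * y') mod int p)" for z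
  have "r z < p \<and> gcong \<pi> z (of_nat (r z))" if gz: "gauss_int z" for z
  proof
    have p0: "int p > 0" using p prime_gt_0_nat by simp
    obtain a b where ab: "Re z = of_int a" "Im z = of_int b" using gz by (rule int_parts)
    define c where "c = (a - b * x * y') mod int p"
    define q where "q = (a - b * x * y') div int p"
    have c0: "c \<ge> 0" "c < int p" using p0 by (auto simp: c_def)
    have rz: "r z = nat c" using ab by (simp add: r_def c_def)
    show "r z < p" using rz c0 by simp
    have cq: "c = a - b * x * y' - int p * q" unfolding c_def q_def
      by (metis minus_mult_div_eq_mod mult.commute)
    have zz: "z = of_int a + of_int b * \<i>" using ab by (simp add: complex_eq_iff)
    have pic: "\<pi> = of_int x + of_int y * \<i>" using xy by (simp add: complex_eq_iff)
    define m where "m = - s"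
    have ym: "y * y' = 1 + int p * m" using sy unfolding m_def by (simp add: algebra_simps)
    define g where "g = of_int b * (of_int y' - cnj \<pi> * of_int m * \<i>) + cnj \<pi> * of_int q"
    have "gauss_int g" unfolding g_def using gp by blast
    moreover have "z - of_nat (r z) = \<pi> * g"
    proof -
      have "of_nat (r z) = (of_int c :: complex)" using rz c0 by simp
      also have "\<dots> = of_int a - of_int b * of_int x * of_int y' - of_nat p * of_int q"
        using cq by simp
      finally have "z - of_nat (r z) = of_int b * (\<i> + of_int x * of_int y') + of_nat p * of_int q"
        using zz by (simp add: algebra_simps)
      also have "of_int x * of_int y' = \<pi> * of_int y' - of_int (y * y') * \<i>"
        using pic by (simp add: algebra_simps)
      also have "of_int (y * y') = (1 + of_nat p * of_int m :: complex)" using ym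
        by (metis of_int_add of_int_1 of_int_mult of_int_of_nat_eq)
      finally show ?thesis unfolding g_def using pi[symmetric]
        by (simp add: algebra_simps)
    qed
    ultimately show "gcong \<pi> z (of_nat (r z))" by (auto simp: gcong_def)
  qed
  then show ?thesis by blast
qed



definition U :: "nat \<Rightarrow> complex" where
  "U c = (if c mod 4 = 0 then 1 else if c mod 4 = 1 then -1 else if c mod 4 = 2 then \<i> else -\<i>)"
definition Rs :: "nat \<Rightarrow> complex" where
  "Rs c = (if c < 4 then 1 else -1)"

definition ga :: "nat \<Rightarrow> nat \<Rightarrow> nat \<Rightarrow> complex" where
  "ga i j c = (if i < j then U c else if j < i then \<i> * Rs c else U c)"
definition gb :: "nat \<Rightarrow> nat \<Rightarrow> nat \<Rightarrow> complex" where
  "gb i j c = (if i < j then Rs c else if j < i then U c else (if c < 4 then U c else \<i> * U c))"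
definition gv :: "nat \<Rightarrow> nat \<Rightarrow> nat \<Rightarrow> nat \<Rightarrow> complex" where
  "gv i j c = (\<lambda>m. (if m = i then ga i j c else 0) + (if m = j then gb i j c else 0))"

lemma c8: "c < (8::nat) \<Longrightarrow> c \<in> {0,1,2,3,4,5,6,7}" by auto

definition wt :: "complex \<Rightarrow> real" where "wt z = \<bar>Re z\<bar> + \<bar>Im z\<bar>"

lemma U_props: "U c \<noteq> 0" "gauss_int (U c)" "wt (U c) = 1"
  by (auto simp: U_def gauss_int_def wt_def)
lemma Rs_props: "Rs c \<noteq> 0" "gauss_int (Rs c)" "wt (Rs c) = 1" "wt (\<i> * Rs c) = 1"
  by (auto simp: Rs_def gauss_int_def wt_def)

lemma ga_props: "ga i j c \<noteq> 0" "gauss_int (ga i j c)" "wt (ga i j c) = 1"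
  by (auto simp: ga_def U_props Rs_props)
lemma gb_props: "gb i j c \<noteq> 0" "gauss_int (gb i j c)" "wt (gb i j c) = 1"
  by (auto simp: gb_def U_props Rs_props) (auto simp: U_def gauss_int_def wt_def)

lemma diag_nz: "c < 8 \<Longrightarrow> U c + (if c < 4 then U c else \<i> * U c) \<noteq> 0"
  by (drule c8) (auto simp: U_def complex_eq_iff)

lemma diag_inj: "c < 8 \<Longrightarrow> c' < 8 \<Longrightarrow>
  U c + (if c < 4 then U c else \<i> * U c) = U c' + (if c' < 4 then U c' else \<i> * U c') \<Longrightarrow> c = c'"
  by (drule c8, drule c8) (auto simp: U_def complex_eq_iff)

lemma off_inj: "c < 8 \<Longrightarrow> c' < 8 \<Longrightarrow> U c = U c' \<Longrightarrow> Rs c = Rs c' \<Longrightarrow> c = c'"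
  by (drule c8, drule c8) (auto simp: U_def Rs_def complex_eq_iff)

lemma off_ne: "Rs c \<noteq> \<i> * Rs c'"
  by (auto simp: Rs_def complex_eq_iff)

lemma gv_supp: "c < 8 \<Longrightarrow> gv i j c m \<noteq> 0 \<longleftrightarrow> m = i \<or> m = j"
  using ga_props(1) gb_props(1) diag_nz[of c]
  by (auto simp: gv_def ga_def gb_def)

lemma wt_add: "wt (a + b) \<le> wt a + wt b" by (simp add: wt_def)
lemma wt_0[simp]: "wt 0 = 0" by (simp add: wt_def)

lemma gv_wt: "i < n \<Longrightarrow> j < n \<Longrightarrow> (\<Sum>m<n. wt (gv i j c m)) \<le> 2"
proof -
  assume ij: "i < n" "j < n"
  have "(\<Sum>m<n. wt (gv i j c m)) \<le> (\<Sum>m<n. (if m = i then wt (ga i j c) else 0) + (if m = j then wt (gb i j c) else 0))"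
    by (rule sum_mono) (auto simp: gv_def intro: order.trans[OF wt_add])
  also have "\<dots> = 2" using ij by (simp add: sum.distrib ga_props gb_props)
  finally show ?thesis .
qed

lemma gv_small: "c < 8 \<Longrightarrow> small (gv i j c m)"
  using ga_props gb_props
  by (drule_tac c8) (auto simp: gv_def small_def ga_def gb_def U_def Rs_def gauss_int_def)

lemma gv_inj:
  assumes c: "c < 8" "c' < 8" and eq: "gv i j c = gv i' j' c'"
  shows "i = i' \<and> j = j' \<and> c = c'"
proof -
  have s: "m = i \<or> m = j \<longleftrightarrow> m = i' \<or> m = j'" for m
    using gv_supp[OF c(1), of i j m] gv_supp[OF c(2), of i' j' m] eq by simp
  have v: "gv i j c m = gv i' j' c' m" for m using eq by simp
  consider "i = j" | "i < j" | "j < i" by linarith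
  then show ?thesis
  proof cases
    case 1
    then have "i' = i" "j' = i" using s by blast+
    with v[of i] 1 show ?thesis using diag_inj[OF c] by (simp add: gv_def ga_def gb_def)
  next
    case 2
    then have "(i' = i \<and> j' = j) \<or> (i' = j \<and> j' = i)" using s by (metis less_irrefl)
    then show ?thesis
    proof
      assume a: "i' = i \<and> j' = j"
      then have "U c = U c'" using v[of i] 2 by (simp add: gv_def ga_def)
      moreover have "Rs c = Rs c'" using v[of j] 2 a by (simp add: gv_def gb_def)
      ultimately show ?thesis using off_inj[OF c] a by simp
    next
      assume a: "i' = j \<and> j' = i"
      then have "Rs c = \<i> * Rs c'" using v[of j] 2 by (simp add: gv_def ga_def gb_def)
      then show ?thesis using off_ne by blast
    qed
  next
    case 3
    then have "(i' = i \<and> j' = j) \<or> (i' = j \<and> j' = i)" using s by (metis less_irrefl)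
    then show ?thesis
    proof
      assume a: "i' = i \<and> j' = j"
      then have "\<i> * Rs c = \<i> * Rs c'" using v[of i] 3 by (simp add: gv_def ga_def)
      then have "Rs c = Rs c'" by simp
      moreover have "U c = U c'" using v[of j] 3 a by (simp add: gv_def gb_def)
      ultimately show ?thesis using off_inj[OF c] a by simp
    next
      assume a: "i' = j \<and> j' = i"
      then have "\<i> * Rs c = Rs c'" using v[of i] 3 by (simp add: gv_def ga_def gb_def)
      then show ?thesis using off_ne by metis
    qed
  qed
qed



lemma mw_le:
  assumes "gauss_int z" shows "real (mannheim_weight \<pi> z) \<le> wt z"
proof -
  obtain a b where ab: "Re z = of_int a" "Im z = of_int b" using assms by (rule int_parts)
  have z: "of_int a + of_int b * \<i> = z" using ab by (simp add: complex_eq_iff)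
  have "mannheim_weight \<pi> z \<le> nat (\<bar>a\<bar> + \<bar>b\<bar>)"
    unfolding mannheim_weight_def
    by (rule Least_le) (use z in auto)
  then have "real (mannheim_weight \<pi> z) \<le> real (nat (\<bar>a\<bar> + \<bar>b\<bar>))" by simp
  also have "\<dots> = wt z" using ab by (simp add: wt_def)
  finally show ?thesis .
qed

lemma vec_wt_le:
  assumes "\<And>m. m < n \<Longrightarrow> gauss_int (x m)"
  shows "real (vec_mannheim_weight \<pi> n x) \<le> (\<Sum>m<n. wt (x m))"
  unfolding vec_mannheim_weight_def of_nat_sum
  by (rule sum_mono) (simp add: assms mw_le)

lemma comb_in_C:
  fixes k :: nat
  assumes lc: "linear_code \<pi> n k' C" and b: "\<forall>j<k. b j \<in> C" and c: "\<forall>j<k. gauss_int (c j)"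
  shows "(\<lambda>i. \<Sum>j<k. c j * b j i) \<in> C"
  using b c
proof (induction k)
  case 0
  then show ?case using lc by (simp add: linear_code_def)
next
  case (Suc k)
  have A: "(\<lambda>i. \<Sum>j<k. c j * b j i) \<in> C" using Suc by simp
  have B: "(\<lambda>i. c k * b k i) \<in> C" using Suc lc by (simp add: linear_code_def)
  have add: "\<forall>x\<in>C. \<forall>y\<in>C. (\<lambda>i. x i + y i) \<in> C" using lc by (simp add: linear_code_def)
  have "(\<lambda>i. (\<lambda>i. \<Sum>j<k. c j * b j i) i + (\<lambda>i. c k * b k i) i) \<in> C"
    using add[rule_format, OF A B] .
  then show ?case by simp
qed



lemma PiE_eqI: "x \<in> PiE S T \<Longrightarrow> y \<in> PiE S T \<Longrightarrow> (\<And>i. i \<in> S \<Longrightarrow> x i = y i) \<Longrightarrow> x = y"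
  by (rule PiE_ext)

theorem theorem5:
  fixes p n k :: nat and \<pi> :: complex and C :: "(nat \<Rightarrow> complex) set"
  assumes "prime p" and "p mod 4 = 1" and "p \<ge> 13"
    and "gauss_int \<pi>" and "\<pi> * cnj \<pi> = of_nat p"
    and "linear_code \<pi> n k C"
    and "corrects_weight2 \<pi> n C"
  shows "p ^ (n - k) \<ge> 8 * n\<^sup>2 + 1"
proof -
  note p = assms(1,2,3) and pi = assms(5) and gp = assms(4) and lc = assms(6) and cw = assms(7)
  obtain r where r: "\<And>z. gauss_int z \<Longrightarrow> r z < p \<and> gcong \<pi> z (of_nat (r z))"
    using reps_exist[OF assms(1) pi gp] by blast
  have Cg: "C \<subseteq> gvecs n" using lc by (simp add: linear_code_def)
  have Cres: "\<forall>x\<in>gvecs n. \<forall>y\<in>C. vcong \<pi> n x y \<longrightarrow> x \<in> C" using lc by (simp add: linear_code_def)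
  obtain b where b1: "\<forall>j<k. b j \<in> C"
    and b3: "\<forall>l. (\<forall>j<k. gauss_int (l j)) \<and> vcong \<pi> n (\<lambda>i. \<Sum>j<k. l j * b j i) (\<lambda>i. 0)
              \<longrightarrow> (\<forall>j<k. gcong \<pi> (l j) 0)"
    using lc[unfolded linear_code_def] by (elim conjE exE) (rule that, assumption+)
  have bg: "gauss_int (b j i)" if "j < k" for j i
  proof (cases "i < n")
    case True then show ?thesis using b1 Cg that by (auto simp: gvecs_def)
  next
    case False
    have "b j \<in> gvecs n" using b1 Cg that by blast
    then have "b j i = 0" using False by (simp add: gvecs_def)
    then show ?thesis by auto
  qed
  define D where "D = {..<n} \<times> {..<n} \<times> {..<(8::nat)}"
  define Dom where "Dom = insert None (Some ` D)"
  define ev where "ev d = (case d of None \<Rightarrow> (\<lambda>_. 0) | Some (i, j, c) \<Rightarrow> gv i j c)" for d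
  define L where "L = {..<k} \<rightarrow>\<^sub>E {..<p}"
  define Tg where "Tg = {..<n} \<rightarrow>\<^sub>E {..<p}"
  define comb where "comb l = (\<lambda>i. \<Sum>j<k. of_nat (l j) * b j i)" for l :: "nat \<Rightarrow> nat"
  define h where "h x = restrict (\<lambda>i. r (ev (fst x) i + comb (snd x) i)) {..<n}" for x
  have ev_small: "small (ev d m)" if "d \<in> Dom" for d m
    using that gv_small by (auto simp: Dom_def D_def ev_def small_def)
  have ev_g: "gauss_int (ev d m)" if "d \<in> Dom" for d m
    using ev_small[OF that] by (simp add: small_def)
  have ev_vecs: "ev d \<in> gvecs n" if "d \<in> Dom" for d
    using that ev_g[OF that] by (auto simp: Dom_def D_def ev_def gvecs_def gv_def)
  have ev_wt: "vec_mannheim_weight \<pi> n (ev d) \<le> 2" if "d \<in> Dom" for d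
  proof -
    have "real (vec_mannheim_weight \<pi> n (ev d)) \<le> (\<Sum>m<n. wt (ev d m))"
      by (rule vec_wt_le) (rule ev_g[OF that])
    also have "\<dots> \<le> 2" using that gv_wt by (auto simp: Dom_def D_def ev_def)
    finally show ?thesis by linarith
  qed
  have ev_inj: "inj_on ev Dom"
  proof (rule inj_onI)
    fix d d' assume dd: "d \<in> Dom" "d' \<in> Dom" "ev d = ev d'"
    show "d = d'"
    proof (cases d)
      case None
      show ?thesis
      proof (cases d')
        case (Some t)
        then obtain i j c where "t = (i, j, c)" "c < 8" using dd(2) by (auto simp: Dom_def D_def)
        then have "(\<lambda>_. 0) = gv i j c" using dd None Some by (simp add: ev_def)
        then have "gv i j c i = 0" by metis
        then show ?thesis using gv_supp[of c i j i] \<open>c < 8\<close> by simp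
      qed (simp add: None)
    next
      case (Some t)
      then obtain i j c where t: "t = (i, j, c)" "c < 8" using dd(1) by (auto simp: Dom_def D_def)
      show ?thesis
      proof (cases d')
        case None
        then have "gv i j c = (\<lambda>_. 0)" using dd Some t by (simp add: ev_def)
        then have "gv i j c i = 0" by metis
        then show ?thesis using gv_supp[of c i j i] t by simp
      next
        case (Some t')
        then obtain i' j' c' where t': "t' = (i', j', c')" "c' < 8" using dd(2) by (auto simp: Dom_def D_def)
        have "gv i j c = gv i' j' c'" using dd Some \<open>d = Some t\<close> t t' by (simp add: ev_def)
        then show ?thesis using gv_inj[OF t(2) t'(2)] Some \<open>d = Some t\<close> t t' by simp
      qed
    qed
  qed
  have card_Dom: "card Dom = 8 * n^2 + 1"
  proof -
    have "card D = n * (n * 8)" by (simp add: D_def card_cartesian_product)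
    moreover have "finite D" by (simp add: D_def)
    ultimately have "card Dom = Suc (n * (n * 8))"
      by (simp add: Dom_def card_image)
    then show ?thesis by (simp add: power2_eq_square)
  qed
  have card_L: "card L = p ^ k" by (simp add: L_def card_PiE)
  have card_Tg: "card Tg = p ^ n" by (simp add: Tg_def card_PiE)
  have fin: "finite Tg" by (simp add: Tg_def finite_PiE)
  have sub: "h ` (Dom \<times> L) \<subseteq> Tg"
  proof
    fix y assume "y \<in> h ` (Dom \<times> L)"
    then obtain d l where dl: "d \<in> Dom" "l \<in> L" "y = h (d, l)" by auto
    have "gauss_int (ev d i + comb l i)" for i
      using ev_g[OF dl(1)] bg unfolding comb_def by (intro gi_add gi_sum gi_mult) auto
    then show "y \<in> Tg" using r dl by (auto simp: Tg_def h_def)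
  qed
  have inj: "inj_on h (Dom \<times> L)"
  proof (rule inj_onI)
    fix x x' assume xx: "x \<in> Dom \<times> L" "x' \<in> Dom \<times> L" "h x = h x'"
    obtain d l where x: "x = (d, l)" "d \<in> Dom" "l \<in> L" using xx(1) by auto
    obtain d' l' where x': "x' = (d', l')" "d' \<in> Dom" "l' \<in> L" using xx(2) by auto
    define v where "v i = ev d i + comb l i" for i
    define v' where "v' i = ev d' i + comb l' i" for i
    have vg: "gauss_int (v i)" "gauss_int (v' i)" for i
      using ev_g[OF x(2)] ev_g[OF x'(2)] bg unfolding comb_def v_def v'_def
      by (intro gi_add gi_sum gi_mult; auto)+
    have rv: "r (v i) = r (v' i)" if "i < n" for i
      using fun_cong[OF xx(3), of i] that x x' by (simp add: h_def v_def v'_def)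
    have cv: "gcong \<pi> (v i) (v' i)" if "i < n" for i
      using r[OF vg(1)[of i]] r[OF vg(2)[of i]] rv[OF that]
      by (metis gcong_sym gcong_trans)
    define y0 where "y0 = (\<lambda>i. \<Sum>j<k. (of_nat (l' j) - of_nat (l j)) * b j i)"
    have y0C: "y0 \<in> C" unfolding y0_def
      by (rule comb_in_C[OF lc]) (use b1 in auto)
    define xv where "xv = (\<lambda>i. ev d i - ev d' i)"
    have xv_vecs: "xv \<in> gvecs n"
      using ev_vecs[OF x(2)] ev_vecs[OF x'(2)] by (auto simp: gvecs_def xv_def)
    have y0e: "y0 i = comb l' i - comb l i" for i
      unfolding y0_def comb_def by (simp add: sum_subtractf left_diff_distrib)
    have diff: "xv i - y0 i = v i - v' i" for i
      unfolding y0e by (simp add: xv_def v_def v'_def algebra_simps)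
    have "vcong \<pi> n xv y0"
      unfolding vcong_def
    proof (intro allI impI)
      fix i assume "i < n"
      then show "gcong \<pi> (xv i) (y0 i)" using cv[of i] diff[of i] by (simp add: gcong_def)
    qed
    then have "xv \<in> C" using Cres xv_vecs y0C by blast
    then have "vcong \<pi> n (ev d) (ev d')"
      using cw ev_vecs[OF x(2)] ev_vecs[OF x'(2)] ev_wt[OF x(2)] ev_wt[OF x'(2)]
      unfolding corrects_weight2_def xv_def by blast
    then have "ev d i = ev d' i" for i
    proof (cases "i < n")
      case True
      then show ?thesis using \<open>vcong \<pi> n (ev d) (ev d')\<close> small_inj[OF p pi ev_small[OF x(2)] ev_small[OF x'(2)]]
        by (simp add: vcong_def)
    next
      case False
      then show ?thesis using ev_vecs[OF x(2)] ev_vecs[OF x'(2)] by (simp add: gvecs_def)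
    qed
    then have "ev d = ev d'" by blast
    then have dd: "d = d'" using ev_inj x(2) x'(2) by (simp add: inj_on_def)
    have "vcong \<pi> n (\<lambda>i. \<Sum>j<k. (of_nat (l' j) - of_nat (l j)) * b j i) (\<lambda>i. 0)"
      unfolding vcong_def
    proof (intro allI impI)
      fix i assume "i < n"
      then have "gcong \<pi> (xv i) (y0 i)" using \<open>vcong \<pi> n xv y0\<close> by (simp add: vcong_def)
      moreover have "xv i = 0" using dd by (simp add: xv_def)
      ultimately show "gcong \<pi> ((\<lambda>i. \<Sum>j<k. (of_nat (l' j) - of_nat (l j)) * b j i) i) ((\<lambda>i. 0) i)"
        unfolding y0_def by (simp add: gcong_sym)
    qed
    then have gl: "\<forall>j<k. gcong \<pi> (of_nat (l' j) - of_nat (l j)) 0"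
      using b3[rule_format, of "\<lambda>j. of_nat (l' j) - of_nat (l j)"] by blast
    then have "l' j = l j" if "j < k" for j
    proof -
      have "gcong \<pi> (of_nat (l' j)) (of_nat (l j))"
        using gl that by (simp add: gcong_def)
      moreover have "l' j < p" "l j < p" using x(3) x'(3) that by (auto simp: L_def)
      ultimately show ?thesis using reps_distinct[OF assms(1) pi] by blast
    qed
    then have "l = l'" using x(3) x'(3) unfolding L_def
      by (intro PiE_eqI[of l _ _ l']) auto
    then show "x = x'" using dd x x' by simp
  qed
  have "card (Dom \<times> L) \<le> card Tg" by (rule card_inj_on_le[OF inj sub fin])
  then have main: "(8 * n^2 + 1) * p ^ k \<le> p ^ n"
    using card_Dom card_L card_Tg by (simp add: card_cartesian_product)
  have p1: "p > 1" using p by (simp add: prime_gt_1_nat)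
  show ?thesis
  proof (cases "k \<le> n")
    case True
    then have "p ^ n = p ^ (n - k) * p ^ k" by (simp add: power_add[symmetric])
    then have "(8 * n^2 + 1) * p ^ k \<le> p ^ (n - k) * p ^ k" using main by simp
    moreover have "p ^ k > 0" using p1 by simp
    ultimately show ?thesis by (metis mult_le_cancel2 not_gr0)
  next
    case False
    then have "p ^ n < p ^ k" using p1 by simp
    moreover have "p ^ k \<le> (8 * n^2 + 1) * p ^ k" by simp
    ultimately show ?thesis using main by linarith
  qed
qed


end
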